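(* Fix $\mathbf{x}'\in\Omega$ and suppose $\lambda\neq1$. Then $$\inf_{\mathbf{F}\in\mathbb{R}^{3\times2},\ \det(\mathbf{F}^T\mathbf{F})=1} W_{3D}\big((\mathbf{x}',0),[\mathbf{F},\mathbf{b}(\mathbf{F})]\big)>0,$$ where for $\mathbf{F}=[\mathbf{F}_1,\mathbf{F}_2]$, $\mathbf{b}(\mathbf{F})=\frac{\mathbf{F}_1\times\mathbf{F}_2}{|\mathbf{F}_1\times\mathbf{F}_2|^2}$ and $[\mathbf{F},\mathbf{b}(\mathbf{F})]\in\mathbb{R}^{3\times3}$ has columns $\mathbf{F}_1,\mathbf{F}_2,\mathbf{b}(\mathbf{F})$.
   Context: Let $\Omega\subset\mathbb{R}^2$ be a bounded Lipschitz domain. At the point $\mathbf{x}'$ we are given scalars $s,s_0$ with $-1<s,s_0<\infty$ and a unit vector $\mathbf{m}\in\mathbb{S}^1\subset\mathbb{R}^2$, identified with $(\mathbf{m},0)^T\in\mathbb{R}^3$ when needed; $\lambda=\big(\tfrac{s+1}{s_0+1}\big)^{1/3}$. For $\mathbf{G}\in\mathbb{R}^{3\times3}$ with $\mathbf{G}\mathbf{m}\neq0$, set $\mathbf{n}=\mathbf{G}\mathbf{m}/|\mathbf{G}\mathbf{m}|$, $\mathbf{L}_{\mathbf{m}}=(s_0+1)^{-1/3}(\mathrm{Id}_3+s_0\,\mathbf{m}\otimes\mathbf{m})$, $\mathbf{L}_{\mathbf{n}}=(s+1)^{-1/3}(\mathrm{Id}_3+s\,\mathbf{n}\otimes\mathbf{n})$,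 and $$W_{3D}\big((\mathbf{x}',0),\mathbf{G}\big)=\operatorname{tr}\big(\mathbf{G}^T\mathbf{L}_{\mathbf{n}}^{-1}\mathbf{G}\mathbf{L}_{\mathbf{m}}\big)-3 .$$ *)

theory Defs
  imports "HOL-Analysis.Analysis" "HOL-Analysis.Cross3"
begin

definition outer3 :: "real^3 \<Rightarrow> real^3 \<Rightarrow> real^3^3" where
  "outer3 a b = (\<chi> i j. a$i * b$j)"

definition emb3 :: "real^2 \<Rightarrow> real^3" where
  "emb3 m = vector [m$1, m$2, 0]"

definition L_mat :: "real \<Rightarrow> real^3 \<Rightarrow> real^3^3" where
  "L_mat t v = ((t + 1) powr (-(1/3))) *\<^sub>R (mat 1 + t *\<^sub>R outer3 v v)"

text \<open>W_3D at the fixed point, with material parameters s, s0 and director m there.\<close>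
definition W3D :: "real \<Rightarrow> real \<Rightarrow> real^2 \<Rightarrow> real^3^3 \<Rightarrow> real" where
  "W3D s s0 m G =
     (let n = (1 / norm (G *v emb3 m)) *\<^sub>R (G *v emb3 m)
      in trace (transpose G ** matrix_inv (L_mat s n) ** G ** L_mat s0 (emb3 m)) - 3)"

definition bvec :: "real^2^3 \<Rightarrow> real^3" where
  "bvec F = (1 / (norm (cross3 (column 1 F) (column 2 F)))\<^sup>2) *\<^sub>R
              cross3 (column 1 F) (column 2 F)"

definition augment :: "real^2^3 \<Rightarrow> real^3 \<Rightarrow> real^3^3" where
  "augment F b = (\<chi> i j. if j = 1 then F$i$1 else if j = 2 then F$i$2 else b$i)"

end

theory Submission
  imports Defs
begin

lemma inv_core:
  fixes Q :: "real^3^3"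
  assumes "Q ** Q = x *\<^sub>R Q"
  shows "(mat 1 + p *\<^sub>R Q) ** (mat 1 + q *\<^sub>R Q) = mat 1 + (p + q + p*q*x) *\<^sub>R Q"
proof -
  have h: "\<And>i j. (\<Sum>k\<in>UNIV. Q$i$k * Q$k$j) = x * Q$i$j"
    using assms(1) by (simp add: vec_eq_iff matrix_matrix_mult_def)
  have "((mat 1 + p *\<^sub>R Q) ** (mat 1 + q *\<^sub>R Q))$i$j = (mat 1 + (p + q + p*q*x) *\<^sub>R Q)$i$j" for i j
  proof -
    have "((mat 1 + p *\<^sub>R Q) ** (mat 1 + q *\<^sub>R Q))$i$j =
       (\<Sum>k\<in>UNIV. (mat 1 $i$k) * (mat 1 $k$j)) + q * (\<Sum>k\<in>UNIV. (mat 1 $i$k) * Q$k$j)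
       + p * (\<Sum>k\<in>UNIV. Q$i$k * (mat 1 $k$j)) + p*q*(\<Sum>k\<in>UNIV. Q$i$k * Q$k$j)"
      by (simp add: matrix_matrix_mult_def algebra_simps sum.distrib sum_distrib_left)
    also have "\<dots> = (mat 1 + (p + q + p*q*x) *\<^sub>R Q)$i$j"
      unfolding h using exhaust_3[of i] exhaust_3[of j] by (auto simp: mat_def sum_3 algebra_simps)
    finally show ?thesis .
  qed
  then show ?thesis by (simp add: vec_eq_iff)
qed

lemma matrix_inv_eqI:
  fixes A B :: "real^3^3"
  assumes "A ** B = mat 1" "B ** A = mat 1"
  shows "matrix_inv A = B"
proof -
  have "\<exists>A'. A ** A' = mat 1 \<and> A' ** A = mat 1" using assms by blast
  then have h: "A ** matrix_inv A = mat 1 \<and> matrix_inv A ** A = mat 1"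
    unfolding matrix_inv_def by (rule someI_ex)
  have "matrix_inv A = matrix_inv A ** (A ** B)" using assms by simp
  also have "\<dots> = (matrix_inv A ** A) ** B" by (simp add: matrix_mul_assoc)
  also have "\<dots> = B" using h by simp
  finally show ?thesis .
qed

lemma trace_gen:
  fixes G :: "real^3^3" and u e :: "real^3"
  shows "trace (transpose G ** (k1 *\<^sub>R (mat 1 + t *\<^sub>R outer3 u u)) ** G ** (k2 *\<^sub>R (mat 1 + s0 *\<^sub>R outer3 e e))) =
    k1 * k2 * ((\<Sum>i\<in>UNIV. \<Sum>j\<in>UNIV. (G$i$j)^2) + t * (\<Sum>j\<in>UNIV. (\<Sum>i\<in>UNIV. G$i$j * u$i)^2)
    + s0 * (\<Sum>i\<in>UNIV. (\<Sum>j\<in>UNIV. G$i$j * e$j)^2) + t * s0 * (\<Sum>i\<in>UNIV. u$i * (\<Sum>j\<in>UNIV. G$i$j * e$j))^2)"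
  unfolding trace_def matrix_matrix_mult_def transpose_def outer3_def
  by (simp add: sum_3 mat_def power2_eq_square algebra_simps)

lemma poly_facts:
  fixes F :: "real^2^3" and m :: "real^2"
  and c u v :: "real^3"
  assumes c_def: "c = cross3 (column 1 F) (column 2 F)"
  assumes u_def: "u = (\<chi> i. F$i$1 * m$1 + F$i$2 * m$2)"
  assumes v_def: "v = (\<chi> i. - m$2 * F$i$1 + m$1 * F$i$2)"
  shows "det (transpose F ** F) = c \<bullet> c"
    and "(u \<bullet> u) * (v \<bullet> v) - (u \<bullet> v)^2 = (c \<bullet> c) * (m$1^2 + m$2^2)^2"
    and "(m$1^2 + m$2^2) * (\<Sum>i\<in>UNIV. F$i$1^2 + F$i$2^2) = u \<bullet> u + v \<bullet> v"
    and "(m$1^2 + m$2^2) * ((\<Sum>i\<in>UNIV. F$i$1 * u$i)^2 + (\<Sum>i\<in>UNIV. F$i$2 * u$i)^2) = (u \<bullet> u)^2 + (u \<bullet> v)^2"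
    and "c \<bullet> u = 0"
  unfolding c_def u_def v_def
  by (simp_all add: det_2 matrix_matrix_mult_def transpose_def sum_3 cross3_def inner_vec_def column_def power2_eq_square algebra_simps)

lemma W_formula:
  fixes s s0 :: real and m :: "real^2" and F :: "real^2^3"
  assumes "-1 < s" and "-1 < s0" and "norm m = 1" and "det (transpose F ** F) = 1"
  shows "\<exists>x y. x > 0 \<and> x * y \<ge> 1 \<and> W3D s s0 m (augment F (bvec F)) =
     ((s0 + 1) powr (-(1/3)) / (s + 1) powr (-(1/3))) * (1 + (1 - s / (s + 1)) * ((1 + s0) * x + y) + (s / (s + 1)) / x) - 3"
proof -
  define c where "c = cross3 (column 1 F) (column 2 F)"
  define u :: "real^3" where "u = (\<chi> i. F$i$1 * m$1 + F$i$2 * m$2)"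
  define v :: "real^3" where "v = (\<chi> i. - m$2 * F$i$1 + m$1 * F$i$2)"
  define x where "x = u \<bullet> u"
  define y where "y = v \<bullet> v"
  define w where "w = u \<bullet> v"
  note pf = poly_facts[OF c_def u_def v_def, folded c_def u_def v_def x_def y_def w_def]
  have m1: "m$1^2 + m$2^2 = 1"
  proof -
    have "norm m ^2 = m \<bullet> m" by (simp add: power2_norm_eq_inner)
    then show ?thesis using assms(3) by (simp add: inner_vec_def sum_2 power2_eq_square)
  qed
  have cc: "c \<bullet> c = 1" using pf(1) assms(4) by simp
  have lag: "x * y - w^2 = 1" using pf(2) cc m1 by simp
  have x0: "x \<ge> 0" unfolding x_def by simp
  have xy: "x * y \<ge> 1" using lag by (smt (verit) zero_le_power2)
  have xpos: "x > 0" using x0 xy by (cases "x = 0") auto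
  have bF: "bvec F = c"
  proof -
    have "norm c ^ 2 = 1" using cc by (simp add: power2_norm_eq_inner)
    then show ?thesis unfolding bvec_def c_def by simp
  qed
  define G where "G = augment F c"
  have G1: "G$i$1 = F$i$1" and G2: "G$i$2 = F$i$2" and G3: "G$i$3 = c$i" for i
    unfolding G_def augment_def by simp_all
  define e where "e = emb3 m"
  have e1: "e$1 = m$1" and e2: "e$2 = m$2" and e3: "e$3 = 0"
    unfolding e_def emb3_def by simp_all
  have Ge: "G *v e = u"
    by (simp add: vec_eq_iff matrix_vector_mult_def sum_3 G1 G2 G3 e1 e2 e3 u_def)
  have nu: "norm u = sqrt x" unfolding x_def by (simp add: norm_eq_sqrt_inner)
  define n where "n = (1 / sqrt x) *\<^sub>R u"
  define Q where "Q = outer3 u u"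
  have nn: "outer3 n n = (1/x) *\<^sub>R Q"
    using xpos by (simp add: n_def Q_def outer3_def vec_eq_iff real_sqrt_mult_self power2_eq_square)
  have QQ: "Q ** Q = x *\<^sub>R Q"
    by (simp add: Q_def outer3_def vec_eq_iff matrix_matrix_mult_def sum_3 x_def inner_vec_def algebra_simps)
  define \<alpha> where "\<alpha> = (s + 1) powr (-(1/3))"
  define \<beta> where "\<beta> = (s0 + 1) powr (-(1/3))"
  have \<alpha>0: "\<alpha> \<noteq> 0" unfolding \<alpha>_def using assms(1) by simp
  have Ln: "L_mat s n = \<alpha> *\<^sub>R (mat 1 + (s/x) *\<^sub>R Q)"
    unfolding L_mat_def \<alpha>_def nn by simp
  define q where "q = - (s / ((s+1) * x))"
  have pq: "s/x + q + (s/x)*q*x = 0" "q + s/x + q*(s/x)*x = 0"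
  proof -
    have "s + 1 \<noteq> 0" "x \<noteq> 0" using xpos assms(1) by auto
    note nz = this
    have hq: "q * ((s+1)*x) = -s" unfolding q_def using nz by simp
    have "(s/x + q + (s/x)*q*x) * ((s+1)*x) = s*(s+1) + (q*((s+1)*x)) + s*(q*((s+1)*x))"
      using nz by (simp add: field_simps)
    also have "\<dots> = 0" unfolding hq by (simp add: algebra_simps)
    finally have "s/x + q + (s/x)*q*x = 0" using nz by simp
    then show "s/x + q + (s/x)*q*x = 0" "q + s/x + q*(s/x)*x = 0" by (simp_all add: algebra_simps)
  qed
  have i1: "(mat 1 + (s/x) *\<^sub>R Q) ** (mat 1 + q *\<^sub>R Q) = mat 1"
    using inv_core[OF QQ, of "s/x" q] pq(1) by simp
  have i2: "(mat 1 + q *\<^sub>R Q) ** (mat 1 + (s/x) *\<^sub>R Q) = mat 1"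
    using inv_core[OF QQ, of q "s/x"] pq(2) by simp
  have Linv: "matrix_inv (L_mat s n) = (1/\<alpha>) *\<^sub>R (mat 1 + q *\<^sub>R Q)"
    unfolding Ln
    apply (rule matrix_inv_eqI)
    using \<alpha>0 by (simp_all add: matrix_scalar_ac scalar_matrix_assoc i1 i2)
  have W: "W3D s s0 m (augment F (bvec F)) =
     trace (transpose G ** ((1/\<alpha>) *\<^sub>R (mat 1 + q *\<^sub>R outer3 u u)) ** G ** (\<beta> *\<^sub>R (mat 1 + s0 *\<^sub>R outer3 e e))) - 3"
    unfolding W3D_def Let_def bF G_def[symmetric] e_def[symmetric] Ge nu n_def[symmetric] Linv
    by (simp add: L_mat_def \<beta>_def Q_def)
  have S1: "(\<Sum>i\<in>UNIV. \<Sum>j\<in>UNIV. (G$i$j)^2) = x + y + 1"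
  proof -
    have "(\<Sum>i\<in>UNIV. \<Sum>j\<in>UNIV. (G$i$j)^2) = (\<Sum>i\<in>UNIV. F$i$1^2 + F$i$2^2) + c \<bullet> c"
      by (simp add: sum_3 G1 G2 G3 inner_vec_def power2_eq_square)
    then show ?thesis using pf(3) m1 cc by simp
  qed
  have S2: "(\<Sum>j\<in>UNIV. (\<Sum>i\<in>UNIV. G$i$j * u$i)^2) = x^2 + w^2"
  proof -
    have "(\<Sum>j\<in>UNIV. (\<Sum>i\<in>UNIV. G$i$j * u$i)^2) =
       (\<Sum>i\<in>UNIV. F$i$1 * u$i)^2 + (\<Sum>i\<in>UNIV. F$i$2 * u$i)^2 + (c \<bullet> u)^2"
      by (simp add: sum_3 G1 G2 G3 inner_vec_def)
    then show ?thesis using pf(4) pf(5) m1 by simp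
  qed
  have Gei: "(\<Sum>j\<in>UNIV. G$i$j * e$j) = u$i" for i
    using Ge by (simp add: vec_eq_iff matrix_vector_mult_def)
  have S3: "(\<Sum>i\<in>UNIV. (\<Sum>j\<in>UNIV. G$i$j * e$j)^2) = x"
    by (simp add: Gei x_def inner_vec_def power2_eq_square)
  have S4: "(\<Sum>i\<in>UNIV. u$i * (\<Sum>j\<in>UNIV. G$i$j * e$j)) = x"
    by (simp add: Gei x_def inner_vec_def)
  define r where "r = s / (s + 1)"
  have qr: "q = - r / x" unfolding q_def r_def by simp
  have E: "(x + y + 1) + q * (x^2 + w^2) + s0 * x + q * s0 * x^2 =
      1 + (1 - r) * ((1 + s0) * x + y) + r / x"
  proof -
    have w2: "w^2 = x*y - 1" using lag by simp
    have nz: "x \<noteq> 0" using xpos by simp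
    show ?thesis unfolding w2 qr using nz
      by (simp add: field_simps power2_eq_square)
  qed
  have "W3D s s0 m (augment F (bvec F)) =
     (\<beta> / \<alpha>) * (1 + (1 - s / (s + 1)) * ((1 + s0) * x + y) + (s / (s + 1)) / x) - 3"
    unfolding W trace_gen S1 S2 S3 S4 r_def[symmetric] E[symmetric] by simp
  then show ?thesis using xpos xy unfolding \<alpha>_def \<beta>_def by blast
qed


lemma amgm_part:
  fixes L x :: real
  assumes "L > 0" "x > 0"
  shows "L + 2 / sqrt L \<le> L * (1 + x / L^3 + 1 / x)"
proof -
  define t where "t = sqrt L"
  have t0: "t > 0" using assms(1) by (simp add: t_def)
  have Lt: "L = t^2" using assms(1) by (simp add: t_def)
  have key: "x / t^4 + t^2 / x - 2 / t = (x - t^3)^2 / (x * t^4)"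
    using t0 assms(2) by (simp add: field_simps power2_eq_square) (simp add: algebra_simps eval_nat_numeral)
  have "(x - t^3)^2 / (x * t^4) \<ge> 0" using t0 assms(2) by simp
  then have "2 / t \<le> x / t^4 + t^2 / x" using key by linarith
  moreover have "L * (1 + x / L^3 + 1 / x) = t^2 + (x / t^4 + t^2 / x)"
    unfolding Lt using t0 assms(2) by (simp add: field_simps power2_eq_square) (simp add: algebra_simps eval_nat_numeral)
  ultimately show ?thesis using t0 unfolding t_def[symmetric] Lt by simp
qed

lemma c0_pos:
  fixes L :: real
  assumes "L > 0" "L \<noteq> 1"
  shows "L + 2 / sqrt L - 3 > 0"
proof -
  define t where "t = sqrt L"
  have t0: "t > 0" using assms(1) by (simp add: t_def)
  have Lt: "L = t^2" using assms(1) by (simp add: t_def)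
  have t1: "t \<noteq> 1" using assms Lt by auto
  have "t^2 + 2 / t - 3 = (t - 1)^2 * (t + 2) / t"
    using t0 by (simp add: field_simps power2_eq_square)
  moreover have "(t - 1)^2 * (t + 2) / t > 0" using t0 t1 by simp
  ultimately show ?thesis using t0 unfolding t_def[symmetric] Lt by simp
qed

lemma lower_bound:
  fixes s s0 :: real and m :: "real^2" and F :: "real^2^3"
  assumes "-1 < s" and "-1 < s0" and "norm m = 1" and "det (transpose F ** F) = 1"
  defines "L \<equiv> ((s + 1) / (s0 + 1)) powr (1/3)"
  shows "L + 2 / sqrt L - 3 \<le> W3D s s0 m (augment F (bvec F))"
proof -
  obtain x y where xpos: "x > 0" and xy: "x * y \<ge> 1" and W:
    "W3D s s0 m (augment F (bvec F)) =
     ((s0 + 1) powr (-(1/3)) / (s + 1) powr (-(1/3))) * (1 + (1 - s / (s + 1)) * ((1 + s0) * x + y) + (s / (s + 1)) / x) - 3"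
    using W_formula[OF assms(1-4)] by blast
  have sp: "s + 1 > 0" "s0 + 1 > 0" using assms(1,2) by auto
  have Lpos: "L > 0" unfolding L_def using sp by simp
  have BA: "(s0 + 1) powr (-(1/3)) / (s + 1) powr (-(1/3)) = L"
    unfolding L_def powr_minus_divide powr_divide by simp
  have L3: "L^3 = (s + 1) / (s0 + 1)"
  proof -
    have "L^3 = ((s + 1) / (s0 + 1)) powr (1/3 * real 3)"
      unfolding L_def using sp by (simp add: powr_power)
    then show ?thesis using sp by simp
  qed
  have y1: "y \<ge> 1 / x" using xy xpos by (simp add: field_simps)
  have E: "1 + (1 - s / (s + 1)) * ((1 + s0) * x + y) + (s / (s + 1)) / x \<ge> 1 + x / L^3 + 1 / x"
  proof -
    have a: "1 - s / (s + 1) = 1 / (s + 1)" using sp by (simp add: field_simps)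
    have b: "x / L^3 = (1 / (s + 1)) * ((1 + s0) * x)" unfolding L3 using sp by (simp add: field_simps)
    have "(1 / (s + 1)) * y \<ge> (1 / (s + 1)) * (1 / x)"
      by (rule mult_left_mono[OF y1]) (use sp in simp)
    moreover have "(1 / (s + 1)) * (1 / x) + (s / (s + 1)) / x = 1 / x"
    proof -
      have "(1 / (s + 1)) * (1 / x) + (s / (s + 1)) / x = (1 / (s + 1) + s / (s + 1)) / x"
        by (simp only: add_divide_distrib times_divide_eq_right mult_1_right)
      also have "1 / (s + 1) + s / (s + 1) = (1 + s) / (s + 1)" by (simp only: add_divide_distrib)
      also have "(1 + s) / (s + 1) = 1" using sp by simp
      finally show ?thesis by simp
    qed
    ultimately show ?thesis unfolding a b distrib_left by linarith
  qed
  have "L + 2 / sqrt L \<le> L * (1 + x / L^3 + 1 / x)" by (rule amgm_part[OF Lpos xpos])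
  also have "\<dots> \<le> L * (1 + (1 - s / (s + 1)) * ((1 + s0) * x + y) + (s / (s + 1)) / x)"
    using E Lpos by (simp add: mult_left_mono)
  finally show ?thesis unfolding W BA by simp
qed

theorem lemma2p5:
  fixes s s0 :: real and m :: "real^2"
  assumes "-1 < s" and "-1 < s0"
    and "norm m = 1"
    and "((s + 1) / (s0 + 1)) powr (1/3) \<noteq> 1"
  shows "(INF F \<in> {F :: real^2^3. det (transpose F ** F) = 1}.
            W3D s s0 m (augment F (bvec F))) > 0"
proof -
  define L where "L = ((s + 1) / (s0 + 1)) powr (1/3)"
  have Lpos: "L > 0" unfolding L_def using assms(1,2) by simp
  have c0: "L + 2 / sqrt L - 3 > 0" using c0_pos[OF Lpos] assms(4) unfolding L_def by simp
  define F0 :: "real^2^3" where "F0 = (\<chi> i j. if i = 1 \<and> j = 1 then 1 else if i = 2 \<and> j = 2 then 1 else 0)"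
  have "det (transpose F0 ** F0) = 1"
    by (simp add: F0_def det_2 matrix_matrix_mult_def transpose_def sum_3)
  then have ne: "{F :: real^2^3. det (transpose F ** F) = 1} \<noteq> {}" by blast
  have "L + 2 / sqrt L - 3 \<le> (INF F \<in> {F :: real^2^3. det (transpose F ** F) = 1}.
            W3D s s0 m (augment F (bvec F)))"
    apply (rule cINF_greatest[OF ne])
    using lower_bound[OF assms(1-3)] unfolding L_def by simp
  then show ?thesis using c0 by linarith
qed

end
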